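(* For all $n\ge 1$, $|F_n(321,21354)|=2^n-\binom{n}{2}-1$.
   Context: A permutation $\pi$ avoids a classical pattern $p\in S_k$ if no subsequence of $\pi$ of length $k$ is order-isomorphic to $p$. A Fishburn permutation is a permutation $\pi=\pi_1\cdots\pi_n$ of $[n]$ for which there are no indices $i<j$ with $\pi_j<\pi_i<\pi_{i+1}$ and $\pi_i=\pi_j+1$. $F_n(\sigma_1,\dots,\sigma_k)$ denotes the set of Fishburn permutations of length $n$ avoiding each of the classical patterns $\sigma_1,\dots,\sigma_k$. *)

theory Defs
  imports Main
begin

definition perms_of :: "nat \<Rightarrow> nat list set" where
  "perms_of n = {xs. distinct xs \<and> set xs = {1..n}}"

definition contains :: "nat list \<Rightarrow> nat list \<Rightarrow> bool" where
  "contains xs p \<longleftrightarrow> (\<exists>idx :: nat \<Rightarrow> nat.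
      (\<forall>a b. a < b \<and> b < length p \<longrightarrow> idx a < idx b) \<and>
      (\<forall>a < length p. idx a < length xs) \<and>
      (\<forall>a < length p. \<forall>b < length p. (xs ! idx a < xs ! idx b) \<longleftrightarrow> (p ! a < p ! b)))"

definition avoids :: "nat list \<Rightarrow> nat list \<Rightarrow> bool" where
  "avoids xs p \<longleftrightarrow> \<not> contains xs p"

text \<open>Fishburn: no indices i < j (1-based in the paper; 0-based here) with
  pi_j < pi_i < pi_(i+1) and pi_i = pi_j + 1.\<close>

definition fishburn :: "nat list \<Rightarrow> bool" where
  "fishburn xs \<longleftrightarrow> \<not> (\<exists>i j. i < j \<and> j < length xs \<and> i + 1 < length xs \<and>
      xs ! j < xs ! i \<and> xs ! i < xs ! (i + 1) \<and> xs ! i = xs ! j + 1)"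

definition F :: "nat \<Rightarrow> nat list list \<Rightarrow> nat list set" where
  "F n pats = {xs \<in> perms_of n. fishburn xs \<and> (\<forall>p \<in> set pats. avoids xs p)}"

end

theory Submission
  imports Defs
begin


lemma contains_321:
  "contains xs [3,2,1] \<longleftrightarrow> (\<exists>i j k. i<j \<and> j<k \<and> k < length xs \<and> xs!j < xs!i \<and> xs!k < xs!j)"
proof
  assume "contains xs [3,2,1]"
  then obtain idx where h1: "\<forall>a b. a < b \<and> b < 3 \<longrightarrow> idx a < (idx b::nat)"
    and h2: "\<forall>a<3. idx a < length xs"
    and h3: "\<forall>a<3. \<forall>b<3. (xs ! idx a < xs ! idx b) = ([3,2,1::nat] ! a < [3,2,1] ! b)"
    unfolding contains_def by (auto simp: eval_nat_numeral)
  have "idx 0 < idx 1" "idx 1 < idx 2" "idx 2 < length xs" using h1 h2 by auto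
  moreover have "xs ! idx 1 < xs ! idx 0" "xs ! idx 2 < xs ! idx 1"
    using h3[rule_format, of 1 0] h3[rule_format, of 2 1] by auto
  ultimately show "\<exists>i j k. i<j \<and> j<k \<and> k < length xs \<and> xs!j < xs!i \<and> xs!k < xs!j" by blast
next
  assume "\<exists>i j k. i<j \<and> j<k \<and> k < length xs \<and> xs!j < xs!i \<and> xs!k < xs!j"
  then obtain i j k where h: "i<j" "j<k" "k < length xs" "xs!j < xs!i" "xs!k < xs!j" by blast
  let ?idx = "\<lambda>t. [i,j,k] ! t"
  have a3: "\<And>a. a < 3 \<longleftrightarrow> a = 0 \<or> a = 1 \<or> a = (2::nat)" by auto
  show "contains xs [3,2,1]" unfolding contains_def
    apply (rule exI[of _ ?idx])
    using h by (auto simp: less_Suc_eq)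
qed

lemma contains_21354:
  "contains xs [2,1,3,5,4] \<longleftrightarrow> (\<exists>a b c d e. a<b \<and> b<c \<and> c<d \<and> d<e \<and> e < length xs \<and>
      xs!b < xs!a \<and> xs!a < xs!c \<and> xs!c < xs!e \<and> xs!e < xs!d)"
proof
  assume "contains xs [2,1,3,5,4]"
  then obtain idx where h1: "\<forall>a b. a < b \<and> b < 5 \<longrightarrow> idx a < (idx b::nat)"
    and h2: "\<forall>a<5. idx a < length xs"
    and h3: "\<forall>a<5. \<forall>b<5. (xs ! idx a < xs ! idx b) = ([2,1,3,5,4::nat] ! a < [2,1,3,5,4] ! b)"
    unfolding contains_def by (auto simp: eval_nat_numeral)
  have "idx 0 < idx 1" "idx 1 < idx 2" "idx 2 < idx 3" "idx 3 < idx 4" "idx 4 < length xs" using h1 h2 by auto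
  moreover have "xs ! idx 1 < xs ! idx 0" "xs ! idx 0 < xs ! idx 2" "xs ! idx 2 < xs ! idx 4" "xs ! idx 4 < xs ! idx 3"
    using h3[rule_format, of 1 0] h3[rule_format, of 0 2] h3[rule_format, of 2 4] h3[rule_format, of 4 3] by auto
  ultimately show "\<exists>a b c d e. a<b \<and> b<c \<and> c<d \<and> d<e \<and> e < length xs \<and>
      xs!b < xs!a \<and> xs!a < xs!c \<and> xs!c < xs!e \<and> xs!e < xs!d" by blast
next
  assume "\<exists>a b c d e. a<b \<and> b<c \<and> c<d \<and> d<e \<and> e < length xs \<and>
      xs!b < xs!a \<and> xs!a < xs!c \<and> xs!c < xs!e \<and> xs!e < xs!d"
  then obtain a b c d e where h: "a<b" "b<c" "c<d" "d<e" "e < length xs"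
      "xs!b < xs!a" "xs!a < xs!c" "xs!c < xs!e" "xs!e < xs!d" by blast
  let ?idx = "\<lambda>t. [a,b,c,d,e] ! t"
  have a5: "\<And>a. a < 5 \<longleftrightarrow> a = 0 \<or> a = 1 \<or> a = 2 \<or> a = 3 \<or> a = (4::nat)" by auto
  show "contains xs [2,1,3,5,4]" unfolding contains_def
    apply (rule exI[of _ ?idx])
    using h by (auto simp: less_Suc_eq)
qed


definition cnt :: "bool list \<Rightarrow> nat \<Rightarrow> nat" where
  "cnt w k = card {i. i < k \<and> w!i}"
definition cntU :: "bool list \<Rightarrow> nat \<Rightarrow> nat" where
  "cntU w k = card {i. i < k \<and> \<not> w!i}"

lemma cnt_0[simp]: "cnt w 0 = 0" "cntU w 0 = 0" by (auto simp: cnt_def cntU_def)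

lemma cnt_Suc: "cnt w (Suc k) = cnt w k + (if w!k then 1 else 0)"
proof -
  have "{i. i < Suc k \<and> w!i} = (if w!k then insert k {i. i < k \<and> w!i} else {i. i < k \<and> w!i})"
    by (auto simp: less_Suc_eq)
  then show ?thesis by (simp add: cnt_def)
qed

lemma cntU_Suc: "cntU w (Suc k) = cntU w k + (if w!k then 0 else 1)"
proof -
  have "{i. i < Suc k \<and> \<not> w!i} = (if w!k then {i. i < k \<and> \<not> w!i} else insert k {i. i < k \<and> \<not>w!i})"
    by (auto simp: less_Suc_eq)
  then show ?thesis by (simp add: cntU_def)
qed

lemma cnt_cntU: "cnt w k + cntU w k = k"
  by (induction k) (auto simp: cnt_Suc cntU_Suc)

lemma cnt_mono: "k \<le> k' \<Longrightarrow> cnt w k \<le> cnt w k'"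
  by (induction k' rule: dec_induct) (auto simp: cnt_Suc)

lemma cntU_mono: "k \<le> k' \<Longrightarrow> cntU w k \<le> cntU w k'"
  by (induction k' rule: dec_induct) (auto simp: cntU_Suc)

lemma cnt_less: "k < k' \<Longrightarrow> w!k \<Longrightarrow> cnt w k < cnt w k'"
  using cnt_mono[of "Suc k" k' w] by (simp add: cnt_Suc)

lemma cntU_less: "k < k' \<Longrightarrow> \<not> w!k \<Longrightarrow> cntU w k < cntU w k'"
  using cntU_mono[of "Suc k" k' w] by (simp add: cntU_Suc)

lemma cnt_le: "cnt w k \<le> k" using cnt_cntU[of w k] by arith

lemma cnt_app1: "k \<le> length y \<Longrightarrow> cnt (y @ z) k = cnt y k"
  by (induction k) (auto simp: cnt_Suc nth_append)

lemma cnt_app2: "cnt (y @ z) (length y + k) = cnt y (length y) + cnt z k"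
  by (induction k) (auto simp: cnt_Suc nth_append cnt_app1)

lemma cnt_rep_True: "k \<le> j \<Longrightarrow> cnt (replicate j True @ z) k = k"
  by (induction k) (auto simp: cnt_Suc nth_append)

lemma cnt_rep_False: "k \<le> r \<Longrightarrow> cnt (replicate r False) k = 0"
  by (induction k) (auto simp: cnt_Suc nth_append)


definition c321 :: "nat list \<Rightarrow> bool" where
  "c321 xs \<longleftrightarrow> (\<exists>i j k. i<j \<and> j<k \<and> k < length xs \<and> xs!j < xs!i \<and> xs!k < xs!j)"
definition c5 :: "nat list \<Rightarrow> bool" where
  "c5 xs \<longleftrightarrow> (\<exists>a b c d e. a<b \<and> b<c \<and> c<d \<and> d<e \<and> e < length xs \<and>
      xs!b < xs!a \<and> xs!a < xs!c \<and> xs!c < xs!e \<and> xs!e < xs!d)"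
definition good :: "nat \<Rightarrow> nat list \<Rightarrow> bool" where
  "good n xs \<longleftrightarrow> xs \<in> perms_of n \<and> fishburn xs \<and> \<not> c321 xs \<and> \<not> c5 xs"

lemma F_good: "F n [[3,2,1],[2,1,3,5,4]] = {xs. good n xs}"
proof -
  have "F n [[3,2,1],[2,1,3,5,4]] = {xs \<in> perms_of n. fishburn xs \<and> avoids xs [3,2,1] \<and> avoids xs [2,1,3,5,4]}"
    unfolding F_def by simp
  also have "\<dots> = {xs. good n xs}"
    unfolding good_def avoids_def contains_321 contains_21354 c321_def c5_def by blast
  finally show ?thesis .
qed

definition decm :: "bool list \<Rightarrow> nat \<Rightarrow> nat" where
  "decm w j = cnt w (length w) + 2 - j"
definition dect :: "bool list \<Rightarrow> nat \<Rightarrow> nat \<Rightarrow> nat" where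
  "dect w j k = (if w!k then (if cnt w k < decm w j - 2 then cnt w k + 2 else cnt w k + 3)
                 else decm w j + j + 1 + cntU w k)"
definition dec :: "bool list \<Rightarrow> nat \<Rightarrow> nat list" where
  "dec w j = decm w j # 1 # map (dect w j) [0..<length w]"

definition inY :: "bool list \<Rightarrow> bool" where
  "inY y \<longleftrightarrow> (\<exists>f<length y. \<not> y!f \<and> (\<forall>k<f. y!k) \<and> (Suc f = length y \<or> y!(Suc f)))"
definition valid :: "bool list \<Rightarrow> nat \<Rightarrow> bool" where
  "valid w j \<longleftrightarrow> j = 0 \<or> (\<exists>y r. inY y \<and> w = y @ replicate j True @ replicate r False)"

lemma cnt_total_le: "cnt w (length w) \<le> length w" by (rule cnt_le)

lemma cntU_total: "cntU w (length w) = length w - cnt w (length w)"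
  using cnt_cntU[of w "length w"] by arith

lemma valid_j_le: "valid w j \<Longrightarrow> j \<le> cnt w (length w)"
proof -
  assume "valid w j"
  then consider "j = 0" | y r where "w = y @ replicate j True @ replicate r False"
    unfolding valid_def by blast
  then show ?thesis
  proof cases
    case 2
    have "cnt w (length w) = cnt y (length y) + cnt (replicate j True @ replicate r False) (j + r)"
      using 2 cnt_app2[of y "replicate j True @ replicate r False" "j+r"] by simp
    also have "cnt (replicate j True @ replicate r False) (j + r) = j + cnt (replicate r False) r"
      using cnt_app2[of "replicate j True" "replicate r False" r] cnt_rep_True[of j j "[]"] by simp
    finally show ?thesis by simp
  qed simp
qed


lemma cnt_decomp: "w = y @ replicate j True @ replicate r False \<Longrightarrow> cnt w (length w) = cnt y (length y) + j"
proof -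
  assume 2: "w = y @ replicate j True @ replicate r False"
  have "cnt w (length w) = cnt y (length y) + cnt (replicate j True @ replicate r False) (j + r)"
    using 2 cnt_app2[of y "replicate j True @ replicate r False" "j+r"] by simp
  also have "cnt (replicate j True @ replicate r False) (j + r) = j + cnt (replicate r False) r"
    using cnt_app2[of "replicate j True" "replicate r False" r] cnt_rep_True[of j j "[]"] by simp
  finally show ?thesis using cnt_rep_False[of r r] by simp
qed

lemma dec_len: "length (dec w j) = length w + 2" by (simp add: dec_def)
lemma dec_0: "dec w j ! 0 = decm w j" by (simp add: dec_def)
lemma dec_1: "dec w j ! 1 = 1" by (simp add: dec_def)
lemma dec_1': "dec w j ! Suc 0 = 1" by (simp add: dec_def)
lemma dec_SS: "k < length w \<Longrightarrow> dec w j ! Suc (Suc k) = dect w j k" by (simp add: dec_def)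

lemma pos_split: "a < L + 2 \<Longrightarrow> a \<noteq> 0 \<Longrightarrow> a \<noteq> 1 \<Longrightarrow> \<exists>a'. a = Suc (Suc a') \<and> a' < L"
  by (cases a; cases "a - 1"; auto)

context
  fixes w :: "bool list" and j :: nat
  assumes V: "valid w j"
begin

lemma jle: "j \<le> cnt w (length w)" using valid_j_le[OF V] .

lemma m_eq: "decm w j + j = cnt w (length w) + 2" "decm w j \<ge> 2"
  using jle by (auto simp: decm_def)

lemma L_low: "k < length w \<Longrightarrow> w!k \<Longrightarrow> cnt w k < decm w j - 2 \<Longrightarrow>
   dect w j k = cnt w k + 2 \<and> 2 \<le> dect w j k \<and> dect w j k < decm w j"
  by (auto simp: dect_def)

lemma L_S: "k < length w \<Longrightarrow> w!k \<Longrightarrow> \<not> cnt w k < decm w j - 2 \<Longrightarrow>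
   dect w j k = cnt w k + 3 \<and> decm w j < dect w j k \<and> dect w j k \<le> decm w j + j"
proof -
  assume a: "k < length w" "w!k" "\<not> cnt w k < decm w j - 2"
  have "cnt w k < cnt w (length w)" using cnt_less[OF a(1) a(2)] .
  then show ?thesis using a m_eq by (auto simp: dect_def)
qed

lemma L_le: "k < length w \<Longrightarrow> w!k \<Longrightarrow> 2 \<le> dect w j k \<and> dect w j k \<le> decm w j + j \<and> dect w j k \<noteq> decm w j"
  using L_low L_S by (cases "cnt w k < decm w j - 2") fastforce+

lemma U_ge: "k < length w \<Longrightarrow> \<not> w!k \<Longrightarrow> decm w j + j + 1 \<le> dect w j k \<and> dect w j k \<le> length w + 2"
proof -
  assume a: "k < length w" "\<not> w!k"
  have "cntU w k < cntU w (length w)" using cntU_less[OF a(1) a(2)] .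
  then show ?thesis using a m_eq cntU_total[of w] cnt_total_le[of w] by (auto simp: dect_def)
qed

lemma L_inc: "k < k' \<Longrightarrow> k' < length w \<Longrightarrow> w!k \<Longrightarrow> w!k' \<Longrightarrow> dect w j k < dect w j k'"
proof -
  assume a: "k < k'" "k' < length w" "w!k" "w!k'"
  have "cnt w k < cnt w k'" using cnt_less[OF a(1) a(3)] .
  then show ?thesis using a by (auto simp: dect_def)
qed

lemma U_inc: "k < k' \<Longrightarrow> k' < length w \<Longrightarrow> \<not> w!k \<Longrightarrow> \<not> w!k' \<Longrightarrow> dect w j k < dect w j k'"
proof -
  assume a: "k < k'" "k' < length w" "\<not> w!k" "\<not> w!k'"
  have "cntU w k < cntU w k'" using cntU_less[OF a(1) a(3)] .
  then show ?thesis using a by (auto simp: dect_def)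
qed

definition Lp :: "nat \<Rightarrow> bool" where
  "Lp a \<longleftrightarrow> a = 1 \<or> (2 \<le> a \<and> w!(a-2))"

lemma E1: "a < b \<Longrightarrow> b < length w + 2 \<Longrightarrow> Lp a \<Longrightarrow> dec w j ! a < dec w j ! b"
proof -
  assume a: "a < b" "b < length w + 2" "Lp a"
  obtain b' where b': "b = Suc (Suc b')" "b' < length w" using a pos_split[of b "length w"] unfolding Lp_def by force
  show ?thesis
  proof (cases "a = 1")
    case True
    then show ?thesis using b' dec_SS[of b' w j] dec_1[of w j] L_le[of b'] U_ge[of b'] m_eq
      by (cases "w!b'") auto
  next
    case False
    then obtain a' where a': "a = Suc (Suc a')" "w!a'" using a pos_split[of a "length w"] unfolding Lp_def by force
    have "a' < b'" using a' b' a by simp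
    then show ?thesis using a' b' dec_SS[of b' w j] dec_SS[of a' w j] L_inc[of a' b'] L_le[of a'] U_ge[of b']
      by (cases "w!b'") auto
  qed
qed

lemma E2: "a < b \<Longrightarrow> b < length w + 2 \<Longrightarrow> \<not> Lp a \<Longrightarrow> \<not> Lp b \<Longrightarrow> dec w j ! a < dec w j ! b"
proof -
  assume a: "a < b" "b < length w + 2" "\<not> Lp a" "\<not> Lp b"
  obtain b' where b': "b = Suc (Suc b')" "b' < length w" "\<not> w!b'" using a pos_split[of b "length w"] unfolding Lp_def by force
  show ?thesis
  proof (cases "a = 0")
    case True
    then show ?thesis using b' dec_SS[of b' w j] dec_0[of w j] U_ge[of b'] by auto
  next
    case False
    then obtain a' where a': "a = Suc (Suc a')" "\<not> w!a'" using a pos_split[of a "length w"] unfolding Lp_def by force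
    have "a' < b'" using a' b' a by simp
    then show ?thesis using a' b' dec_SS[of b' w j] dec_SS[of a' w j] U_inc[of a' b'] by auto
  qed
qed

lemma notLp_ge: "a < length w + 2 \<Longrightarrow> \<not> Lp a \<Longrightarrow> (a = 0 \<and> dec w j ! a = decm w j) \<or> (decm w j + j + 1 \<le> dec w j ! a)"
proof -
  assume a: "a < length w + 2" "\<not> Lp a"
  show ?thesis
  proof (cases "a = 0")
    case True then show ?thesis by (simp add: dec_0)
  next
    case False
    then obtain a' where a': "a = Suc (Suc a')" "a' < length w" "\<not> w!a'" using a pos_split[of a "length w"] unfolding Lp_def by force
    then show ?thesis using dec_SS[of a' w j] U_ge[of a'] by auto
  qed
qed

lemma Lp_le: "a < length w + 2 \<Longrightarrow> Lp a \<Longrightarrow> dec w j ! a \<le> decm w j + j \<and> dec w j ! a \<noteq> decm w j \<and> 1 \<le> dec w j ! a"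
proof -
  assume a: "a < length w + 2" "Lp a"
  show ?thesis
  proof (cases "a = 1")
    case True then show ?thesis using m_eq by (simp add: dec_1 dec_1')
  next
    case False
    then obtain a' where a': "a = Suc (Suc a')" "a' < length w" "w!a'" using a pos_split[of a "length w"] unfolding Lp_def by force
    then show ?thesis using dec_SS[of a' w j] L_le[of a'] by auto
  qed
qed

lemma dec_no321: "\<not> c321 (dec w j)"
proof
  assume "c321 (dec w j)"
  then obtain a b c where h: "a<b" "b<c" "c < length (dec w j)" "dec w j!b < dec w j!a" "dec w j!c < dec w j!b"
    unfolding c321_def by blast
  have l: "c < length w + 2" using h(3) dec_len[of w j] by simp
  have "\<not> Lp a" using E1[of a b] h l by fastforce
  moreover have "\<not> Lp b" using E1[of b c] h l by fastforce
  ultimately show False using E2[of a b] h l by fastforce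
qed

lemma dec_distinct: "distinct (dec w j)"
proof -
  have "dec w j ! a \<noteq> dec w j ! b" if "a < b" "b < length w + 2" for a b
  proof (cases "Lp a")
    case True then show ?thesis using E1[OF that] by simp
  next
    case F: False
    show ?thesis
    proof (cases "Lp b")
      case False then show ?thesis using E2[OF that F] by simp
    next
      case True
      have "b < length w + 2" using that by simp
      then show ?thesis using notLp_ge[of a] Lp_le[of b] that F True by fastforce
    qed
  qed
  then show ?thesis unfolding distinct_conv_nth dec_len
    by (metis linorder_neqE_nat)
qed

lemma dec_range: "x \<in> set (dec w j) \<Longrightarrow> 1 \<le> x \<and> x \<le> length w + 2"
proof -
  assume "x \<in> set (dec w j)"
  then obtain a where a: "a < length w + 2" "x = dec w j ! a" by (metis dec_len in_set_conv_nth)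
  show ?thesis
  proof (cases "Lp a")
    case True
    then show ?thesis using Lp_le[OF a(1) True] a m_eq cnt_total_le[of w] by auto
  next
    case False
    show ?thesis
    proof (cases "a = 0")
      case True then show ?thesis using a m_eq cnt_total_le[of w] by (simp add: dec_0)
    next
      case F: False
      then obtain a' where a': "a = Suc (Suc a')" "a' < length w" "\<not> w!a'" using a False pos_split[of a "length w"] unfolding Lp_def by force
      then show ?thesis using dec_SS[of a' w j] U_ge[of a'] a by auto
    qed
  qed
qed

lemma dec_perm: "dec w j \<in> perms_of (length w + 2)"
proof -
  have d: "distinct (dec w j)" by (rule dec_distinct)
  have s: "set (dec w j) \<subseteq> {1..length w + 2}" using dec_range by auto
  have "card (set (dec w j)) = length w + 2" using distinct_card[OF d] dec_len by simp
  then have "set (dec w j) = {1..length w + 2}"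
    using s by (simp add: card_subset_eq)
  then show ?thesis using d by (simp add: perms_of_def)
qed

end


lemma cntU_zero: "cntU w k = 0 \<Longrightarrow> i < k \<Longrightarrow> w!i"
proof (rule ccontr)
  assume a: "cntU w k = 0" "i < k" "\<not> w!i"
  have "i \<in> {i. i < k \<and> \<not> w!i}" using a by simp
  moreover have "finite {i. i < k \<and> \<not> w!i}" by simp
  ultimately have "cntU w k > 0" unfolding cntU_def by (metis card_gt_0_iff empty_iff)
  then show False using a by simp
qed

context
  fixes w :: "bool list" and j :: nat
  assumes V: "valid w j"
begin

context
  fixes y r
  assumes D: "w = y @ replicate j True @ replicate r False" and Y: "inY y" and J: "0 < j"
begin

lemma m2_eq: "decm w j - 2 = cnt y (length y)"
  using cnt_decomp[OF D] by (simp add: decm_def)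

lemma block_L: "length y \<le> k \<Longrightarrow> k < length y + j \<Longrightarrow> w!k"
  using D by (simp add: nth_append)

lemma S_pos: "k < length w \<Longrightarrow> w!k \<Longrightarrow> \<not> cnt w k < decm w j - 2 \<Longrightarrow> length y \<le> k \<and> k < length y + j"
proof -
  assume a: "k < length w" "w!k" "\<not> cnt w k < decm w j - 2"
  have 1: "\<not> k < length y"
  proof
    assume k: "k < length y"
    have "cnt w k < cnt w (length y)" using cnt_less[OF k a(2)] .
    also have "cnt w (length y) = cnt y (length y)" using D cnt_app1[of "length y" y] by simp
    finally show False using a(3) m2_eq by simp
  qed
  have 2: "k < length y + j"
  proof (rule ccontr)
    assume "\<not> k < length y + j"
    then have "w!k = False" using D a(1) by (simp add: nth_append)
    then show False using a(2) by simp
  qed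
  show ?thesis using 1 2 by simp
qed

lemma firstU: "\<exists>f. f < length y \<and> \<not> w!f \<and> Suc f < length w \<and> w!(Suc f) \<and>
   (\<forall>k. k < length w \<longrightarrow> \<not> w!k \<longrightarrow> cntU w k = 0 \<longrightarrow> k = f)"
proof -
  obtain f where f: "f<length y" "\<not> y!f" "\<forall>k<f. y!k" "Suc f = length y \<or> y!(Suc f)"
    using Y unfolding inY_def by blast
  have wf: "\<not> w!f" using f D by (simp add: nth_append)
  have lt: "Suc f < length w" and ws: "w!(Suc f)"
  proof -
    show "Suc f < length w"
    proof (cases "Suc f = length y")
      case True
      have "j > 0" using J .
      then show ?thesis using True D by simp
    next
      case False then show ?thesis using f D by simp
    qed
    show "w!(Suc f)"
    proof (cases "Suc f = length y")
      case True
      have "j > 0" using J .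
      then show ?thesis using True D by (simp add: nth_append)
    next
      case False then show ?thesis using f D by (simp add: nth_append)
    qed
  qed
  have "k = f" if k: "k < length w" "\<not> w!k" "cntU w k = 0" for k
  proof -
    have "\<not> f < k" using cntU_zero[OF k(3)] wf by blast
    moreover have "\<not> k < f"
    proof
      assume kf: "k < f"
      then have "w!k = y!k" using D f(1) by (simp add: nth_append)
      then show False using f(3) k(2) kf by simp
    qed
    ultimately show ?thesis by simp
  qed
  then show ?thesis using f(1) wf lt ws by blast
qed

end

lemma jpos: "j > 0 \<Longrightarrow> \<exists>y r. inY y \<and> w = y @ replicate j True @ replicate r False"
  using V unfolding valid_def by auto

lemma dec_fish: "fishburn (dec w j)"
  unfolding fishburn_def
proof
  assume "\<exists>i q. i < q \<and> q < length (dec w j) \<and> i + 1 < length (dec w j) \<and> dec w j ! q < dec w j ! i \<and>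
      dec w j ! i < dec w j ! (i + 1) \<and> dec w j ! i = dec w j ! q + 1"
  then obtain i q where h: "i < q" "q < length w + 2" "i + 1 < length w + 2" "dec w j ! q < dec w j ! i"
      "dec w j ! i < dec w j ! (i + 1)" "dec w j ! i = dec w j ! q + 1" by (auto simp: dec_len)
  have nLi: "\<not> Lp w i" using E1[OF V h(1) h(2)] h(4) by auto
  have Lq: "Lp w q" using E2[OF V h(1) h(2) nLi] h(4) by auto
  have i0: "i \<noteq> 0"
  proof
    assume "i = 0" then show False using h(5) dec_0[of w j] dec_1'[of w j] m_eq[OF V] by simp
  qed
  have i1: "i \<noteq> 1" using nLi unfolding Lp_def[OF V] by simp
  obtain i' where i': "i = Suc (Suc i')" "i' < length w" using pos_split[of i "length w"] i0 i1 h by auto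
  have wi: "\<not> w!i'" using nLi i' unfolding Lp_def[OF V] by simp
  have vi: "dec w j ! i = dect w j i'" using dec_SS[of i' w j] i' by simp
  have ge: "decm w j + j + 1 \<le> dec w j ! i" using U_ge[OF V i'(2) wi] vi by simp
  have le: "dec w j ! q \<le> decm w j + j" "dec w j ! q \<noteq> decm w j" using Lp_le[OF V h(2) Lq] by auto
  have eqi: "dec w j ! i = decm w j + j + 1" using ge le h(6) by simp
  have c0: "cntU w i' = 0" using eqi vi wi by (simp add: dect_def)
  have jp: "j > 0" using le h(6) eqi by auto
  obtain y r where yr: "inY y" "w = y @ replicate j True @ replicate r False" using jpos[OF jp] by blast
  obtain f where f: "\<not> w!f" "Suc f < length w" "w!(Suc f)"
      "\<forall>k. k < length w \<longrightarrow> \<not> w!k \<longrightarrow> cntU w k = 0 \<longrightarrow> k = f"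
    using firstU[OF yr(2) yr(1) jp] by blast
  have "i' = f" using f(4)[rule_format, OF i'(2) wi c0] .
  then have "dec w j ! (i+1) = dect w j (Suc f)" using dec_SS[of "Suc f" w j] f(2) i'(1) by simp
  moreover have "dect w j (Suc f) \<le> decm w j + j" using L_le[OF V f(2) f(3)] by simp
  ultimately show False using h(5) eqi by simp
qed

lemma dec_no5: "\<not> c5 (dec w j)"
proof
  assume "c5 (dec w j)"
  then obtain a b c d e where h: "a<b" "b<c" "c<d" "d<e" "e < length w + 2"
      "dec w j!b < dec w j!a" "dec w j!a < dec w j!c" "dec w j!c < dec w j!e" "dec w j!e < dec w j!d"
    unfolding c5_def dec_len by blast
  have bl: "b < length w + 2" using h by simp
  have nLa: "\<not> Lp w a" using E1[OF V h(1) bl] h(6) by auto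
  have nLd: "\<not> Lp w d" using E1[OF V h(4) h(5)] h(9) by auto
  have Le: "Lp w e" using E2[OF V h(4) h(5) nLd] h(9) by auto
  have ea: "dec w j ! e \<le> decm w j + j" using Lp_le[OF V h(5) Le] by simp
  have a0: "a = 0"
  proof (rule ccontr)
    assume "a \<noteq> 0"
    then have "decm w j + j + 1 \<le> dec w j ! a" using notLp_ge[OF V _ nLa] h by fastforce
    then show False using ea h by simp
  qed
  have e1: "e \<noteq> 1" "e \<noteq> 0" using h by auto
  obtain e' where e': "e = Suc (Suc e')" "e' < length w" using pos_split[of e "length w"] e1 h by auto
  have we: "w!e'" using Le e' unfolding Lp_def[OF V] by simp
  have ve: "dec w j ! e = dect w j e'" using dec_SS e' by simp
  have gtm: "decm w j < dect w j e'" using h a0 dec_0[of w j] ve by simp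
  have nlow: "\<not> cnt w e' < decm w j - 2" using L_low[OF V e'(2) we] gtm by auto
  have jp: "j > 0" using L_S[OF V e'(2) we nlow] by simp
  obtain y r where yr: "inY y" "w = y @ replicate j True @ replicate r False" using jpos[OF jp] by blast
  have pe: "e' < length y + j" using S_pos[OF yr(2) yr(1) jp e'(2) we nlow] by simp
  have c2: "c \<noteq> 0" "c \<noteq> 1" using h by auto
  obtain c' where c': "c = Suc (Suc c')" "c' < length w" using pos_split[of c "length w"] c2 h by auto
  have vc: "dec w j ! c = dect w j c'" using dec_SS c' by simp
  have wc: "w!c'"
  proof (rule ccontr)
    assume "\<not> w!c'"
    then have "decm w j + j + 1 \<le> dect w j c'" using U_ge[OF V c'(2)] by simp
    then show False using vc h ea by simp
  qed
  have gtc: "decm w j < dect w j c'" using h a0 dec_0[of w j] vc by simp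
  have nlowc: "\<not> cnt w c' < decm w j - 2" using L_low[OF V c'(2) wc] gtc by auto
  have pc: "length y \<le> c'" using S_pos[OF yr(2) yr(1) jp c'(2) wc nlowc] by simp
  obtain d' where d': "d = Suc (Suc d')" "d' < length w" using pos_split[of d "length w"] h by auto
  have wd: "\<not> w!d'" using nLd d' unfolding Lp_def[OF V] by simp
  have "w!d'" using block_L[OF yr(2) yr(1) jp, of d'] pc pe c' d' e' h by simp
  then show False using wd by simp
qed

lemma dec_good: "good (length w + 2) (dec w j)"
  unfolding good_def using dec_perm[OF V] dec_fish dec_no321[OF V] dec_no5 by simp

lemma dec_hd: "dec w j ! 0 \<noteq> 1"
  using m_eq(2)[OF V] dec_0[of w j] by simp

end


definition encw :: "nat list \<Rightarrow> bool list" where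
  "encw p = map (\<lambda>k. \<not> (\<forall>i<k+2. p!i < p!(k+2))) [0..<length p - 2]"
definition encj :: "nat list \<Rightarrow> nat" where
  "encj p = (if \<exists>k<length p - 2. \<forall>i<k+2. p!i < p!(k+2)
     then p!((LEAST k. \<forall>i<k+2. p!i < p!(k+2)) + 2) - p!0 - 1 else 0)"

lemma card_interval_minus:
  assumes "2 \<le> v" "v \<le> M" "v \<noteq> m" "2 \<le> m" "m \<le> M"
  shows "card {x \<in> {2..M} - {m}. x < v} = (if v < m then v - 2 else v - 3)"
proof (cases "v < m")
  case True
  have "{x \<in> {2..M} - {m}. x < v} = {2..<v}" using True assms by auto
  then show ?thesis using True by simp
next
  case False
  then have mv: "m < v" using assms by simp
  have "{x \<in> {2..M} - {m}. x < v} = {2..<v} - {m}" using assms by auto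
  then show ?thesis using False mv assms by (simp add: card_Diff_singleton)
qed

lemma card_interval_minus_all:
  assumes "2 \<le> m" "m \<le> M"
  shows "card ({2..M} - {m}) = M - 2"
  using assms by (simp add: card_Diff_singleton)

lemma card_interval_lt:
  assumes "A \<le> v" "v \<le> n"
  shows "card {x \<in> {A..n}. x < v} = v - A"
proof -
  have "{x \<in> {A..n}. x < v} = {A..<v}" using assms by auto
  then show ?thesis by simp
qed

context
  fixes p :: "nat list" and n :: nat
  assumes G: "good n p" and H: "p!0 \<noteq> 1" and n2: "n \<ge> 2"
begin

lemma perm: "distinct p" "set p = {1..n}" using G by (auto simp: good_def perms_of_def)
lemma len: "length p = n" using perm distinct_card[of p] by simp
lemma rng: "a < n \<Longrightarrow> 1 \<le> p!a \<and> p!a \<le> n"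
  using perm(2) len by (metis atLeastAtMost_iff nth_mem)
lemma surj: "1 \<le> v \<Longrightarrow> v \<le> n \<Longrightarrow> \<exists>a<n. p!a = v"
  using perm(2) len by (metis atLeastAtMost_iff in_set_conv_nth)
lemma inj: "a < n \<Longrightarrow> b < n \<Longrightarrow> p!a = p!b \<Longrightarrow> a = b"
  using perm(1) len nth_eq_iff_index_eq by blast
lemma no321: "\<not> c321 p" using G by (simp add: good_def)
lemma no5: "\<not> c5 p" using G by (simp add: good_def)
lemma fish: "fishburn p" using G by (simp add: good_def)

lemma n0: "0 < n" using n2 by simp

lemma p1: "p!1 = 1"
proof -
  obtain k where k: "k < n" "p!k = 1" using surj[of 1] n2 by auto
  have k0: "k \<noteq> 0"
  proof
    assume "k = 0" then show False using k H by simp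
  qed
  show ?thesis
  proof (rule ccontr)
    assume a: "p!1 \<noteq> 1"
    then have "k \<noteq> 1" using k by auto
    then have k2: "k \<ge> 2" using k0 by simp
    have r0: "p!0 \<ge> 2" using rng[OF n0] H by simp
    have n1: "1 < n" using n2 by simp
    have r1: "p!1 \<ge> 2" using rng[OF n1] a by simp
    show False
    proof (cases "p!1 < p!0")
      case True
      then have "c321 p" unfolding c321_def using k k2 r1 len by (intro exI[of _ 0] exI[of _ 1] exI[of _ k]) auto
      then show False using no321 by simp
    next
      case False
      have "p!0 \<noteq> p!1"
      proof
        assume "p!0 = p!1"
        then have "(0::nat) = 1" using inj[of 0 1] n2 by simp
        then show False by simp
      qed
      then have lt: "p!0 < p!1" using False by simp
      have b1: "1 \<le> p!0 - 1" using r0 by simp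
      have "p!0 \<le> n" using rng[OF n0] by simp
      then have b2: "p!0 - 1 \<le> n" by linarith
      obtain q where q: "q < n" "p!q = p!0 - 1" using surj[OF b1 b2] by blast
      have "q \<noteq> 0"
      proof
        assume "q = 0" then show False using q r0 by simp
      qed
      then have w: "0 < q \<and> q < length p \<and> 0 + 1 < length p \<and> p!q < p!0 \<and> p!0 < p!(0+1) \<and> p!0 = p!q + 1"
        using q lt r0 len n2 by auto
      have "\<not> fishburn p" unfolding fishburn_def using w by blast
      then show False using fish by simp
    qed
  qed
qed

lemma m2: "p!0 \<ge> 2" using rng[OF n0] H by simp

definition isU :: "nat \<Rightarrow> bool" where
  "isU a \<longleftrightarrow> (\<forall>i<a. p!i < p!a)"

lemma bigger_before: "a < n \<Longrightarrow> \<not> isU a \<Longrightarrow> \<exists>d<a. p!a < p!d"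
proof -
  assume a: "a < n" "\<not> isU a"
  then obtain d where d: "d < a" "\<not> p!d < p!a" unfolding isU_def by blast
  have "p!d \<noteq> p!a" using inj[of d a] d a by auto
  then show ?thesis using d by (intro exI[of _ d]) auto
qed

lemma L1: "a < b \<Longrightarrow> b < n \<Longrightarrow> \<not> isU a \<Longrightarrow> p!a < p!b"
proof (rule ccontr)
  assume h: "a < b" "b < n" "\<not> isU a" "\<not> p!a < p!b"
  obtain d where d: "d < a" "p!a < p!d" using bigger_before[of a] h by auto
  have "p!a \<noteq> p!b" using inj[of a b] h by auto
  then have "p!b < p!a" using h by simp
  then have "c321 p" unfolding c321_def using d h len by (intro exI[of _ d] exI[of _ a] exI[of _ b]) auto
  then show False using no321 by simp
qed

lemma L2: "a < b \<Longrightarrow> isU b \<Longrightarrow> p!a < p!b" unfolding isU_def by simp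

lemma L3: "k < n - 2 \<Longrightarrow> (\<forall>k'\<le>k. \<not> isU (k'+2)) \<Longrightarrow> p!(k+2) < p!0"
proof (induction k rule: less_induct)
  case (less k)
  have kn: "k + 2 < n" using less.prems by simp
  obtain d where d: "d < k+2" "p!(k+2) < p!d" using bigger_before[OF kn] less.prems by auto
  have ne: "p!(k+2) \<noteq> p!0" using inj[of "k+2" 0] kn by auto
  show ?case
  proof (rule ccontr)
    assume "\<not> p!(k+2) < p!0"
    then have gt: "p!0 < p!(k+2)" using ne by simp
    show False
    proof (cases "d \<le> 1")
      case True
      then have "d = 0 \<or> d = 1" by auto
      then show False using d gt p1 rng[of "k+2"] kn by auto
    next
      case False
      define d' where "d' = d - 2"
      have d': "d = d' + 2" "d' < k" using d False unfolding d'_def by auto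
      have "p!(d'+2) < p!0" using less.IH[of d'] d' less.prems by auto
      then show False using d d' gt by simp
    qed
  qed
qed

definition hasU :: bool where "hasU \<longleftrightarrow> (\<exists>k<n-2. isU (k+2))"
definition ff :: nat where "ff = (LEAST k. isU (k+2))"
definition jj :: nat where "jj = (if hasU then p!(ff+2) - p!0 - 1 else 0)"

lemma fU: "hasU \<Longrightarrow> ff < n - 2 \<and> isU (ff+2) \<and> (\<forall>k<ff. \<not> isU (k+2))"
proof -
  assume "hasU"
  then obtain k where k: "k < n-2" "isU (k+2)" unfolding hasU_def by blast
  have "isU (ff+2)" unfolding ff_def using k(2) by (rule LeastI)
  moreover have "ff \<le> k" unfolding ff_def using k(2) by (rule Least_le)
  moreover have "\<forall>k<ff. \<not> isU (k+2)" unfolding ff_def using not_less_Least by blast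
  ultimately show ?thesis using k by simp
qed

lemma encw_len: "length (encw p) = n - 2" by (simp add: encw_def len)
lemma encw_nth: "k < n - 2 \<Longrightarrow> encw p ! k = (\<not> isU (k+2))"
  by (simp add: encw_def len isU_def)

lemma encj_eq: "encj p = jj"
  unfolding encj_def jj_def hasU_def ff_def isU_def len by simp

lemma L4: "hasU \<Longrightarrow> p!(ff+2) = p!0 + jj + 1"
proof -
  assume h: hasU
  then have "p!0 < p!(ff+2)" using fU L2[of 0 "ff+2"] by simp
  then show ?thesis using h unfolding jj_def by simp
qed

lemma noU_all: "\<not> hasU \<Longrightarrow> k < n - 2 \<Longrightarrow> p!(k+2) < p!0"
  using L3[of k] unfolding hasU_def by auto

lemma L5: "k < n - 2 \<Longrightarrow> \<not> isU (k+2) \<Longrightarrow> p!(k+2) \<le> p!0 + jj \<and> p!(k+2) \<noteq> p!0 \<and> 2 \<le> p!(k+2)"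
proof -
  assume k: "k < n - 2" "\<not> isU (k+2)"
  have kn: "k+2 < n" using k by simp
  have ne0: "p!(k+2) \<noteq> p!0" using inj[of "k+2" 0] kn by auto
  have ne1: "p!(k+2) \<noteq> 1" using inj[of "k+2" 1] kn p1 by auto
  have ge2: "2 \<le> p!(k+2)" using ne1 rng[OF kn] by simp
  have le: "p!(k+2) \<le> p!0 + jj"
  proof (cases hasU)
    case False
    then show ?thesis using noU_all k by fastforce
  next
    case True
    note fu = fU[OF True]
    show ?thesis
    proof (rule ccontr)
      assume "\<not> p!(k+2) \<le> p!0 + jj"
      then have ge: "p!(ff+2) \<le> p!(k+2)" using L4[OF True] by simp
      have kf: "k \<noteq> ff" using fu k by auto
      have fn: "ff + 2 < n" using fu by linarith
      have "p!(ff+2) \<noteq> p!(k+2)"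
      proof
        assume "p!(ff+2) = p!(k+2)"
        then have "ff + 2 = k + 2" using inj[OF fn kn] by simp
        then show False using kf by simp
      qed
      then have gt: "p!(ff+2) < p!(k+2)" using ge by simp
      obtain e where e: "e < k+2" "p!(k+2) < p!e" using bigger_before[OF kn k(2)] by auto
      have gtm: "p!0 < p!(ff+2)" using L4[OF True] by simp
      have e2: "e \<ge> 2"
      proof (rule ccontr)
        assume "\<not> e \<ge> 2"
        then have "e = 0 \<or> e = 1" by auto
        then show False using e gt gtm p1 by auto
      qed
      define e' where "e' = e - 2"
      have e': "e = e' + 2" using e2 unfolding e'_def by simp
      have ef: "\<not> e' < ff"
      proof
        assume "e' < ff"
        have en: "e' < n - 2" using e e' k by simp
        have "\<forall>k'\<le>e'. \<not> isU (k'+2)" using fu \<open>e' < ff\<close> by auto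
        then have "p!(e'+2) < p!0" using L3[OF en] by simp
        then show False using e e' gt gtm by simp
      qed
      have ef2: "e' \<noteq> ff" using e e' gt by auto
      have "c5 p" unfolding c5_def
        apply (rule exI[of _ 0], rule exI[of _ 1], rule exI[of _ "ff+2"], rule exI[of _ e], rule exI[of _ "k+2"])
        using ef ef2 e e' gt gtm p1 kn len m2 by auto
      then show False using no5 by simp
    qed
  qed
  show ?thesis using le ne0 ge2 by simp
qed

lemma L6: "k < n - 2 \<Longrightarrow> isU (k+2) \<Longrightarrow> p!0 + jj + 1 \<le> p!(k+2)"
proof -
  assume k: "k < n - 2" "isU (k+2)"
  then have h: hasU unfolding hasU_def by blast
  note fu = fU[OF h]
  have "ff \<le> k" using fu k by (meson not_le)
  then show ?thesis
  proof (cases "ff = k")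
    case True then show ?thesis using L4[OF h] by simp
  next
    case False
    then have "ff + 2 < k + 2" using \<open>ff \<le> k\<close> by simp
    then show ?thesis using L2[of "ff+2" "k+2"] k L4[OF h] by simp
  qed
qed

lemma mj_le: "p!0 + jj \<le> n"
proof (cases hasU)
  case True
  then have fn: "ff + 2 < n" using fU by linarith
  then have "p!(ff+2) \<le> n" using rng[OF fn] by simp
  then show ?thesis using L4[OF True] by simp
next
  case False
  then show ?thesis using rng[OF n0] unfolding jj_def by simp
qed

lemma Lvals: "(\<lambda>k. p!(k+2)) ` {k. k < n-2 \<and> encw p ! k} = {2..p!0+jj} - {p!0}"
proof (intro equalityI subsetI)
  fix x assume "x \<in> (\<lambda>k. p!(k+2)) ` {k. k < n-2 \<and> encw p ! k}"
  then obtain k where k: "k < n-2" "encw p ! k" "x = p!(k+2)" by blast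
  then have "\<not> isU (k+2)" using encw_nth by simp
  then show "x \<in> {2..p!0+jj} - {p!0}" using L5[OF k(1)] k(3) by simp
next
  fix x assume x: "x \<in> {2..p!0+jj} - {p!0}"
  have xn: "x \<le> n" using mj_le x by simp
  have x1: "1 \<le> x" using x by simp
  obtain a where a: "a < n" "p!a = x" using surj[OF x1 xn] by blast
  have a0: "a \<noteq> 0"
  proof
    assume "a = 0" then show False using a x by simp
  qed
  have a1: "a \<noteq> 1"
  proof
    assume "a = 1" then show False using a x p1 by simp
  qed
  have an: "a < (n-2) + 2" using a n2 by simp
  obtain k where k: "a = Suc (Suc k)" "k < n - 2" using pos_split[OF an a0 a1] by blast
  have "\<not> isU (k+2)"
  proof
    assume "isU (k+2)"
    then have "p!0 + jj + 1 \<le> p!(k+2)" using L6[OF k(2)] by simp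
    then show False using a k x by simp
  qed
  then have "encw p ! k" using encw_nth[OF k(2)] by simp
  then show "x \<in> (\<lambda>k. p!(k+2)) ` {k. k < n-2 \<and> encw p ! k}" using a k by force
qed

lemma Uvals: "(\<lambda>k. p!(k+2)) ` {k. k < n-2 \<and> \<not> encw p ! k} = {p!0+jj+1..n}"
proof (intro equalityI subsetI)
  fix x assume "x \<in> (\<lambda>k. p!(k+2)) ` {k. k < n-2 \<and> \<not> encw p ! k}"
  then obtain k where k: "k < n-2" "\<not> encw p ! k" "x = p!(k+2)" by blast
  then have u: "isU (k+2)" using encw_nth by simp
  have kn: "k + 2 < n" using k by simp
  show "x \<in> {p!0+jj+1..n}" using L6[OF k(1) u] k(3) rng[OF kn] by simp
next
  fix x assume x: "x \<in> {p!0+jj+1..n}"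
  have xn: "x \<le> n" using x by simp
  have x1: "1 \<le> x" using x by simp
  obtain a where a: "a < n" "p!a = x" using surj[OF x1 xn] by blast
  have a0: "a \<noteq> 0"
  proof
    assume "a = 0" then show False using a x by simp
  qed
  have a1: "a \<noteq> 1"
  proof
    assume "a = 1" then show False using a x p1 m2 by simp
  qed
  have an: "a < (n-2) + 2" using a n2 by simp
  obtain k where k: "a = Suc (Suc k)" "k < n - 2" using pos_split[OF an a0 a1] by blast
  have "isU (k+2)"
  proof (rule ccontr)
    assume "\<not> isU (k+2)"
    then have "p!(k+2) \<le> p!0 + jj" using L5[OF k(2)] by simp
    then show False using a k x by simp
  qed
  then have "\<not> encw p ! k" using encw_nth[OF k(2)] by simp
  then show "x \<in> (\<lambda>k. p!(k+2)) ` {k. k < n-2 \<and> \<not> encw p ! k}" using a k by force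
qed

lemma inj_tau: "inj_on (\<lambda>k. p!(k+2)) A" if "A \<subseteq> {k. k < n - 2}"
proof (rule inj_onI)
  fix x y assume xy: "x \<in> A" "y \<in> A" "p!(x+2) = p!(y+2)"
  have "x < n - 2" "y < n - 2" using that xy by auto
  then have "x + 2 < n" "y + 2 < n" by linarith+
  then show "x = y" using inj[of "x+2" "y+2"] xy(3) by simp
qed

lemma cntW: "cnt (encw p) (n-2) = p!0 + jj - 2"
proof -
  have "cnt (encw p) (n-2) = card {k. k < n-2 \<and> encw p ! k}" unfolding cnt_def by simp
  also have "\<dots> = card ((\<lambda>k. p!(k+2)) ` {k. k < n-2 \<and> encw p ! k})"
    by (rule card_image[symmetric], rule inj_tau) auto
  also have "\<dots> = card ({2..p!0+jj} - {p!0})" using Lvals by simp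
  also have "\<dots> = p!0 + jj - 2" using card_interval_minus_all[of "p!0" "p!0+jj"] m2 by simp
  finally show ?thesis .
qed

lemma decm_eq: "decm (encw p) jj = p!0"
  using cntW m2 unfolding decm_def encw_len by simp

lemma valL: "k < n-2 \<Longrightarrow> encw p ! k \<Longrightarrow> dect (encw p) jj k = p!(k+2)"
proof -
  assume k: "k < n-2" "encw p ! k"
  let ?t = "\<lambda>k. p!(k+2)"
  have nu: "\<not> isU (k+2)" using k encw_nth by simp
  have vin: "p!(k+2) \<in> {2..p!0+jj} - {p!0}" using k Lvals by blast
  have S: "{x \<in> {2..p!0+jj} - {p!0}. x < p!(k+2)} = ?t ` {i. i < k \<and> encw p ! i}"
  proof (intro equalityI subsetI)
    fix x assume "x \<in> {x \<in> {2..p!0+jj} - {p!0}. x < p!(k+2)}"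
    then have x: "x \<in> {2..p!0+jj} - {p!0}" "x < p!(k+2)" by auto
    then obtain i where i: "i < n-2" "encw p ! i" "x = p!(i+2)" using Lvals by blast
    have "\<not> k < i"
    proof
      assume "k < i"
      then have "p!(k+2) < p!(i+2)" using L1[of "k+2" "i+2"] nu i by simp
      then show False using x i by simp
    qed
    moreover have "i \<noteq> k" using x i by auto
    ultimately show "x \<in> ?t ` {i. i < k \<and> encw p ! i}" using i by force
  next
    fix x assume "x \<in> ?t ` {i. i < k \<and> encw p ! i}"
    then obtain i where i: "i < k" "encw p ! i" "x = p!(i+2)" by blast
    have "\<not> isU (i+2)" using i k encw_nth[of i] by simp
    then have lt: "p!(i+2) < p!(k+2)" using L1[of "i+2" "k+2"] i k by simp
    have "i < n - 2" using i k by simp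
    then have "x \<in> (\<lambda>k. p!(k+2)) ` {k. k < n-2 \<and> encw p ! k}" using i by blast
    then have "x \<in> {2..p!0+jj} - {p!0}" using Lvals by simp
    then show "x \<in> {x \<in> {2..p!0+jj} - {p!0}. x < p!(k+2)}" using lt i by simp
  qed
  have "card {x \<in> {2..p!0+jj} - {p!0}. x < p!(k+2)} = card {i. i < k \<and> encw p ! i}"
    unfolding S by (rule card_image, rule inj_tau) (use k in auto)
  then have c: "cnt (encw p) k = (if p!(k+2) < p!0 then p!(k+2) - 2 else p!(k+2) - 3)"
    using card_interval_minus[of "p!(k+2)" "p!0+jj" "p!0"] vin m2 unfolding cnt_def by simp
  show ?thesis
  proof (cases "p!(k+2) < p!0")
    case True
    then show ?thesis using c k(2) vin m2 decm_eq unfolding dect_def by (simp, arith)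
  next
    case False
    then have "p!0 < p!(k+2)" using vin by auto
    then show ?thesis using c k(2) vin m2 decm_eq unfolding dect_def by simp
  qed
qed

lemma valU: "k < n-2 \<Longrightarrow> \<not> encw p ! k \<Longrightarrow> dect (encw p) jj k = p!(k+2)"
proof -
  assume k: "k < n-2" "\<not> encw p ! k"
  let ?t = "\<lambda>k. p!(k+2)"
  have u: "isU (k+2)" using k encw_nth by simp
  have vin: "p!(k+2) \<in> {p!0+jj+1..n}" using k Uvals by blast
  have S: "{x \<in> {p!0+jj+1..n}. x < p!(k+2)} = ?t ` {i. i < k \<and> \<not> encw p ! i}"
  proof (intro equalityI subsetI)
    fix x assume "x \<in> {x \<in> {p!0+jj+1..n}. x < p!(k+2)}"
    then have x: "x \<in> {p!0+jj+1..n}" "x < p!(k+2)" by auto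
    then obtain i where i: "i < n-2" "\<not> encw p ! i" "x = p!(i+2)" using Uvals by blast
    have ui: "isU (i+2)" using i encw_nth by simp
    have "\<not> k < i"
    proof
      assume "k < i"
      then have "p!(k+2) < p!(i+2)" using L2[of "k+2" "i+2"] ui by simp
      then show False using x i by simp
    qed
    moreover have "i \<noteq> k" using x i by auto
    ultimately show "x \<in> ?t ` {i. i < k \<and> \<not> encw p ! i}" using i by force
  next
    fix x assume "x \<in> ?t ` {i. i < k \<and> \<not> encw p ! i}"
    then obtain i where i: "i < k" "\<not> encw p ! i" "x = p!(i+2)" by blast
    have lt: "p!(i+2) < p!(k+2)" using L2[of "i+2" "k+2"] u i by simp
    have "i < n - 2" using i k by simp
    then have "x \<in> (\<lambda>k. p!(k+2)) ` {k. k < n-2 \<and> \<not> encw p ! k}" using i by blast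
    then have "x \<in> {p!0+jj+1..n}" using Uvals by simp
    then show "x \<in> {x \<in> {p!0+jj+1..n}. x < p!(k+2)}" using lt i by simp
  qed
  have "card {x \<in> {p!0+jj+1..n}. x < p!(k+2)} = card {i. i < k \<and> \<not> encw p ! i}"
    unfolding S by (rule card_image, rule inj_tau) (use k in auto)
  then have c: "cntU (encw p) k = p!(k+2) - (p!0+jj+1)"
    using card_interval_lt[of "p!0+jj+1" "p!(k+2)" n] vin unfolding cntU_def by simp
  show ?thesis using c k(2) vin decm_eq unfolding dect_def by simp
qed

lemma dec_enc: "dec (encw p) jj = p"
proof (rule nth_equalityI)
  show "length (dec (encw p) jj) = length p" using dec_len encw_len len n2 by simp
next
  fix i assume "i < length (dec (encw p) jj)"
  then have i: "i < (n-2) + 2" using dec_len encw_len by simp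
  show "dec (encw p) jj ! i = p ! i"
  proof (cases "i = 0")
    case True then show ?thesis using dec_0 decm_eq by simp
  next
    case F0: False
    show ?thesis
    proof (cases "i = 1")
      case True then show ?thesis using dec_1 p1 by simp
    next
      case False
      obtain k where k: "i = Suc (Suc k)" "k < n - 2" using pos_split[OF i F0 False] by blast
      have "dec (encw p) jj ! i = dect (encw p) jj k" using dec_SS[of k "encw p" jj] k encw_len by simp
      also have "\<dots> = p!(k+2)" using valL[OF k(2)] valU[OF k(2)] by (cases "encw p ! k") auto
      finally show ?thesis using k by simp
    qed
  qed
qed


lemma valid_enc: "valid (encw p) jj"
proof (cases "jj = 0")
  case True then show ?thesis by (simp add: valid_def)
next
  case False
  then have h: hasU unfolding jj_def by (cases hasU) auto
  note fu = fU[OF h]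
  have jp: "0 < jj" using False by simp
  have m1: "p!0 + 1 \<in> {2..p!0+jj} - {p!0}" using m2 jp by auto
  then have "p!0 + 1 \<in> (\<lambda>k. p!(k+2)) ` {k. k < n-2 \<and> encw p ! k}" using Lvals by simp
  then obtain q0 where q0: "q0 < n-2" "encw p ! q0" "p!(q0+2) = p!0+1" by auto
  have nq0: "\<not> isU (q0+2)" using q0 encw_nth by simp
  have C1: "i < jj \<Longrightarrow> q0 + i < n - 2 \<and> encw p ! (q0+i) \<and> p!(q0+i+2) = p!0+1+i" for i
  proof (induction i)
    case 0 then show ?case using q0 by simp
  next
    case (Suc i)
    then have IH: "q0 + i < n - 2" "encw p ! (q0+i)" "p!(q0+i+2) = p!0+1+i" by auto
    have nqi: "\<not> isU (q0+i+2)" using IH encw_nth by simp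
    have vin: "p!0+2+i \<in> {2..p!0+jj} - {p!0}" using Suc.prems by auto
    then have "p!0+2+i \<in> (\<lambda>k. p!(k+2)) ` {k. k < n-2 \<and> encw p ! k}" using Lvals by simp
    then obtain q where q: "q < n-2" "encw p ! q" "p!(q+2) = p!0+2+i" by auto
    have nq: "\<not> isU (q+2)" using q encw_nth by simp
    have qne: "q \<noteq> q0 + i" using q IH by auto
    have qnl: "\<not> q < q0 + i"
    proof
      assume "q < q0 + i"
      then have "p!(q+2) < p!(q0+i+2)" using L1[of "q+2" "q0+i+2"] nq IH(1) by simp
      then show False using q IH by simp
    qed
    show ?case
    proof (cases "q = q0 + Suc i")
      case True then show ?thesis using q by simp
    next
      case False
      define t where "t = q0 + Suc i"
      have tq: "t < q" using qne qnl False unfolding t_def by simp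
      have tn: "t < n - 2" using tq q by simp
      show ?thesis
      proof (cases "encw p ! t")
        case True
        have nt: "\<not> isU (t+2)" using True tn encw_nth by simp
        have "p!(q0+i+2) < p!(t+2)" using L1[of "q0+i+2" "t+2"] nqi tn unfolding t_def by simp
        moreover have "p!(t+2) < p!(q+2)" using L1[of "t+2" "q+2"] nt tq q by simp
        ultimately show ?thesis using IH q by simp
      next
        case F2: False
        have ut: "isU (t+2)" using F2 tn encw_nth by simp
        have "p!0 + jj + 1 \<le> p!(t+2)" using L6[OF tn ut] .
        then have lt1: "p!(q+2) < p!(t+2)" using q Suc.prems by simp
        have "c5 p" unfolding c5_def
          apply (rule exI[of _ 0], rule exI[of _ 1], rule exI[of _ "q0+2"], rule exI[of _ "t+2"], rule exI[of _ "q+2"])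
          using lt1 q q0 tq m2 p1 len unfolding t_def by auto
        then show ?thesis using no5 by simp
      qed
    qed
  qed
  have C2: "\<not> encw p ! k" if k: "q0 + jj \<le> k" "k < n - 2" for k
  proof
    assume wk: "encw p ! k"
    have nk: "\<not> isU (k+2)" using wk k encw_nth by simp
    have "p!(k+2) \<in> {2..p!0+jj} - {p!0}" using Lvals k wk by blast
    then have le: "p!(k+2) \<le> p!0 + jj" by simp
    have gt: "p!0 + 1 < p!(k+2)" using L1[of "q0+2" "k+2"] nq0 k q0 jp by simp
    define i where "i = p!(k+2) - p!0 - 1"
    have i: "i < jj" "p!(k+2) = p!0 + 1 + i" using le gt unfolding i_def by auto
    have "p!(q0+i+2) = p!(k+2)" using C1[OF i(1)] i by simp
    moreover have "q0 + i + 2 < n" using C1[OF i(1)] by linarith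
    moreover have "k + 2 < n" using k by linarith
    ultimately have "q0 + i + 2 = k + 2" using inj[of "q0+i+2" "k+2"] by simp
    then show False using i k by simp
  qed
  have C3: "ff < q0"
  proof -
    have "\<not> q0 < ff"
    proof
      assume "q0 < ff"
      then have "\<forall>k'\<le>q0. \<not> isU (k'+2)" using fu by auto
      then have "p!(q0+2) < p!0" using L3 q0 by blast
      then show False using q0 by simp
    qed
    moreover have "ff \<noteq> q0" using fu nq0 by auto
    ultimately show ?thesis by simp
  qed
  have C4: "encw p ! (ff+1)"
  proof (rule ccontr)
    assume "\<not> encw p ! (ff+1)"
    moreover have f1n: "ff + 1 < n - 2" using C3 q0 by simp
    ultimately have "isU (ff+1+2)" using encw_nth[of "ff+1"] by simp
    then have u1: "isU (ff+3)" by (simp add: numeral_3_eq_3)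
    have vin: "p!0+jj \<in> {2..p!0+jj} - {p!0}" using m2 jp by auto
    then have "p!0+jj \<in> (\<lambda>k. p!(k+2)) ` {k. k < n-2 \<and> encw p ! k}" using Lvals by simp
    then obtain q where q: "q < n-2" "encw p ! q" "p!(q+2) = p!0+jj" by auto
    have nq: "\<not> isU (q+2)" using q encw_nth by simp
    have "\<not> q < ff"
    proof
      assume "q < ff"
      then have "\<forall>k'\<le>q. \<not> isU (k'+2)" using fu by auto
      then have "p!(q+2) < p!0" using L3 q by blast
      then show False using q by simp
    qed
    moreover have "q \<noteq> ff" using nq fu by auto
    moreover have "q \<noteq> ff + 1" using nq u1 by (auto simp: numeral_eq_Suc)
    ultimately have qf: "ff + 1 < q" by simp
    have "p!(ff+2) < p!(ff+3)" using L2[of "ff+2" "ff+3"] u1 by simp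
    then have w: "ff+2 < q+2 \<and> q+2 < length p \<and> (ff+2) + 1 < length p \<and> p!(q+2) < p!(ff+2) \<and>
        p!(ff+2) < p!((ff+2)+1) \<and> p!(ff+2) = p!(q+2) + 1"
      using qf q L4[OF h] len f1n by (auto simp: numeral_eq_Suc)
    have "\<not> fishburn p" unfolding fishburn_def using w by blast
    then show False using fish by simp
  qed
  have "q0 + (jj - 1) < n - 2" using C1[of "jj - 1"] jp by simp
  then have qj: "q0 + jj \<le> n - 2" using jp by linarith
  define y where "y = take q0 (encw p)"
  define r where "r = n - 2 - q0 - jj"
  have ly: "length y = q0" using q0 encw_len unfolding y_def by simp
  have dec: "encw p = y @ replicate jj True @ replicate r False"
  proof (rule nth_equalityI)
    show "length (encw p) = length (y @ replicate jj True @ replicate r False)"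
      using encw_len qj q0 unfolding y_def r_def by simp
  next
    fix k assume "k < length (encw p)"
    then have k: "k < n - 2" using encw_len by simp
    show "encw p ! k = (y @ replicate jj True @ replicate r False) ! k"
    proof (cases "k < q0")
      case True
      then have "y ! k = encw p ! k" unfolding y_def by simp
      then show ?thesis using True ly by (simp add: nth_append)
    next
      case F1: False
      show ?thesis
      proof (cases "k < q0 + jj")
        case True
        have "encw p ! (q0 + (k - q0))" using C1[of "k - q0"] True F1 by simp
        then show ?thesis using True F1 ly by (simp add: nth_append)
      next
        case False
        have a: "\<not> k - q0 < jj" using False F1 by linarith
        have b: "k - (q0 + jj) < r" unfolding r_def using k False by linarith
        show ?thesis using C2[of k] k F1 ly a b False by (simp add: nth_append)
      qed
    qed
  qed
  have "inY y"
    unfolding inY_def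
  proof (intro exI[of _ ff] conjI allI impI)
    show "ff < length y" using C3 ly by simp
    have "y ! ff = encw p ! ff" unfolding y_def using C3 by simp
    then show "\<not> y ! ff" using fu encw_nth[of ff] by simp
    show "y ! k" if "k < ff" for k
    proof -
      have "y ! k = encw p ! k" unfolding y_def using C3 that by simp
      moreover have "k < n - 2" using that fu by simp
      ultimately show ?thesis using fu that encw_nth[of k] by simp
    qed
    show "Suc ff = length y \<or> y ! Suc ff"
    proof (cases "Suc ff < q0")
      case True
      then have "y ! Suc ff = encw p ! (ff+1)" unfolding y_def by simp
      then show ?thesis using C4 by simp
    next
      case False then show ?thesis using C3 ly by simp
    qed
  qed
  then show ?thesis unfolding valid_def using dec by blast
qed

lemma enc_props: "valid (encw p) (encj p)" "dec (encw p) (encj p) = p" "length (encw p) = n - 2"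
  using valid_enc dec_enc encj_eq encw_len by auto

end


context
  fixes w :: "bool list" and j :: nat
  assumes V: "valid w j"
begin

lemma Lp_SS: "Lp w (Suc (Suc k)) = w!k" using Lp_def[OF V] by simp

lemma encw_dec_nth: "k < length w \<Longrightarrow> (\<not> (\<forall>i<k+2. dec w j ! i < dec w j ! (k+2))) = w!k"
proof -
  assume k: "k < length w"
  have kl: "k + 2 < length w + 2" using k by simp
  show ?thesis
  proof (cases "w!k")
    case False
    have nL: "\<not> Lp w (k+2)" using Lp_SS[of k] False by simp
    have "dec w j ! i < dec w j ! (k+2)" if i: "i < k+2" for i
    proof (cases "Lp w i")
      case True then show ?thesis using E1[OF V i kl] by simp
    next
      case F2: False then show ?thesis using E2[OF V i kl F2 nL] by simp
    qed
    then show ?thesis using False by simp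
  next
    case True
    have ex: "\<exists>i<k+2. \<not> dec w j ! i < dec w j ! (k+2)"
    proof (cases "cnt w k < decm w j - 2")
      case low: True
      have "dect w j k < decm w j" using L_low[OF V k True low] by simp
      then show ?thesis using dec_0[of w j] dec_SS[OF k, of j] by (intro exI[of _ 0]) simp
    next
      case False
      have s: "decm w j < dect w j k" "dect w j k \<le> decm w j + j" using L_S[OF V k True False] by auto
      then have jp: "0 < j" by simp
      obtain y r where yr: "inY y" "w = y @ replicate j True @ replicate r False" using jpos[OF V jp] by blast
      obtain f where f: "f < length y" "\<not> w!f"
        using firstU[OF V yr(2) yr(1) jp] by blast
      have ky: "length y \<le> k" using S_pos[OF V yr(2) yr(1) jp k True False] by simp
      have fl: "f < length w" using f ky k by simp
      have "decm w j + j + 1 \<le> dect w j f" using U_ge[OF V fl f(2)] by simp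
      then have "dec w j ! (k+2) < dec w j ! (f+2)" using dec_SS[OF k, of j] dec_SS[OF fl, of j] s by simp
      then show ?thesis using f ky by (intro exI[of _ "f+2"]) simp
    qed
    then show ?thesis using True by simp
  qed
qed

lemma encw_dec: "encw (dec w j) = w"
proof (rule nth_equalityI)
  show "length (encw (dec w j)) = length w" by (simp add: encw_def dec_len)
next
  fix k assume "k < length (encw (dec w j))"
  then have k: "k < length w" by (simp add: encw_def dec_len)
  have "encw (dec w j) ! k = (\<not> (\<forall>i<k+2. dec w j ! i < dec w j ! (k+2)))"
    using k by (simp add: encw_def dec_len)
  then show "encw (dec w j) ! k = w ! k" using encw_dec_nth[OF k] by simp
qed

lemma encj_dec: "encj (dec w j) = j"
proof -
  let ?P = "\<lambda>k. \<forall>i<k+2. dec w j ! i < dec w j ! (k+2)"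
  have P: "k < length w \<Longrightarrow> ?P k = (\<not> w!k)" for k using encw_dec_nth[of k] by auto
  have lw: "length (dec w j) - 2 = length w" by (simp add: dec_len)
  show ?thesis
  proof (cases "\<exists>k<length w. ?P k")
    case True
    then obtain k0 where k0: "k0 < length w" "?P k0" by blast
    define g where "g = (LEAST k. ?P k)"
    have Pg: "?P g" unfolding g_def using k0(2) by (rule LeastI)
    have gk: "g \<le> k0" unfolding g_def using k0(2) by (rule Least_le)
    have gl: "g < length w" using gk k0 by simp
    have wg: "\<not> w!g" using P[OF gl] Pg by simp
    have bef: "w!i" if "i < g" for i
    proof -
      have "\<not> ?P i" using that unfolding g_def by (rule not_less_Least)
      moreover have "i < length w" using that gl by simp
      ultimately show ?thesis using P[of i] by blast
    qed
    have "{i. i < g \<and> \<not> w!i} = {}" using bef by auto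
    then have c0: "cntU w g = 0" unfolding cntU_def by simp
    have "dec w j ! (g+2) = decm w j + j + 1" using dec_SS[OF gl, of j] wg c0 by (simp add: dect_def)
    moreover have "encj (dec w j) = dec w j ! (g+2) - dec w j ! 0 - 1"
      unfolding encj_def lw g_def using True by auto
    ultimately show ?thesis using dec_0[of w j] by simp
  next
    case False
    have j0: "j = 0"
    proof (rule ccontr)
      assume "j \<noteq> 0"
      then have jp: "0 < j" by simp
      obtain y r where yr: "inY y" "w = y @ replicate j True @ replicate r False" using jpos[OF V jp] by blast
      obtain f where f: "f < length y" "\<not> w!f" using firstU[OF V yr(2) yr(1) jp] by blast
      have fl: "f < length w" using f yr(2) by simp
      have "?P f" using P[OF fl] f(2) by blast
      then show False using False fl by blast
    qed
    have "encj (dec w j) = 0" unfolding encj_def lw using False by auto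
    then show ?thesis using j0 by simp
  qed
qed

end

definition VV :: "nat \<Rightarrow> (bool list \<times> nat) set" where
  "VV N = {(w,j). length w = N \<and> valid w j}"
definition Bset :: "nat \<Rightarrow> nat list set" where
  "Bset n = {p. good n p \<and> p!0 \<noteq> 1}"

lemma Bset_bij: "bij_betw (\<lambda>(w,j). dec w j) (VV N) (Bset (N+2))"
proof (rule bij_betw_imageI)
  show "inj_on (\<lambda>(w,j). dec w j) (VV N)"
  proof (rule inj_onI)
    fix x y assume x: "x \<in> VV N" and y: "y \<in> VV N" and e: "(\<lambda>(w,j). dec w j) x = (\<lambda>(w,j). dec w j) y"
    obtain w1 j1 where 1: "x = (w1,j1)" "valid w1 j1" using x unfolding VV_def by auto
    obtain w2 j2 where 2: "y = (w2,j2)" "valid w2 j2" using y unfolding VV_def by auto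
    have d: "dec w1 j1 = dec w2 j2" using e 1 2 by simp
    have "w1 = w2" using encw_dec[OF 1(2)] encw_dec[OF 2(2)] d by metis
    moreover have "j1 = j2" using encj_dec[OF 1(2)] encj_dec[OF 2(2)] d by metis
    ultimately show "x = y" using 1 2 by simp
  qed
next
  show "(\<lambda>(w,j). dec w j) ` VV N = Bset (N+2)"
  proof (intro equalityI subsetI)
    fix p assume "p \<in> (\<lambda>(w,j). dec w j) ` VV N"
    then obtain w j where wj: "valid w j" "length w = N" "p = dec w j" unfolding VV_def by auto
    show "p \<in> Bset (N+2)" using dec_good[OF wj(1)] dec_hd[OF wj(1)] wj unfolding Bset_def by simp
  next
    fix p assume "p \<in> Bset (N+2)"
    then have g: "good (N+2) p" "p!0 \<noteq> 1" unfolding Bset_def by auto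
    have n2: "N + 2 \<ge> 2" by simp
    note e = enc_props[OF g(1) g(2) n2]
    have "(encw p, encj p) \<in> VV N" using e unfolding VV_def by simp
    moreover have "p = (\<lambda>(w,j). dec w j) (encw p, encj p)" using e by simp
    ultimately show "p \<in> (\<lambda>(w,j). dec w j) ` VV N" by blast
  qed
qed

lemma card_Bset: "card (Bset (N+2)) = card (VV N)"
  using bij_betw_same_card[OF Bset_bij] by simp


definition Yk :: "nat \<Rightarrow> bool list set" where
  "Yk k = {y. length y = k \<and> inY y}"
definition JR :: "nat \<Rightarrow> (nat \<times> nat) set" where
  "JR M = {(j,r). 0 < j \<and> j + r = M}"

lemma inY_Nil: "\<not> inY []" by (simp add: inY_def)

lemma inY_True: "inY (True # y) \<longleftrightarrow> inY y"
proof
  assume "inY (True # y)"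
  then obtain f where f: "f < length (True # y)" "\<not> (True#y)!f" "\<forall>k<f. (True#y)!k"
      "Suc f = length (True#y) \<or> (True#y)!(Suc f)" unfolding inY_def by blast
  have "f \<noteq> 0" using f(2) by (cases f) auto
  then obtain g where g: "f = Suc g" by (cases f) auto
  show "inY y" unfolding inY_def
  proof (intro exI[of _ g] conjI allI impI)
    show "g < length y" using f(1) g by simp
    show "\<not> y!g" using f(2) g by simp
    show "y!k" if "k < g" for k using f(3)[rule_format, of "Suc k"] that g by simp
    show "Suc g = length y \<or> y!(Suc g)" using f(4) g by simp
  qed
next
  assume "inY y"
  then obtain f where f: "f < length y" "\<not> y!f" "\<forall>k<f. y!k" "Suc f = length y \<or> y!(Suc f)"
    unfolding inY_def by blast
  show "inY (True # y)" unfolding inY_def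
  proof (intro exI[of _ "Suc f"] conjI allI impI)
    show "Suc f < length (True # y)" using f by simp
    show "\<not> (True#y)!(Suc f)" using f by simp
    show "(True#y)!k" if "k < Suc f" for k using f(3) that by (cases k) auto
    show "Suc (Suc f) = length (True#y) \<or> (True#y)!(Suc (Suc f))" using f(4) by simp
  qed
qed

lemma inY_False: "inY (False # y) \<longleftrightarrow> (y = [] \<or> y!0)"
proof
  assume "inY (False # y)"
  then obtain f where f: "f < length (False # y)" "\<not> (False#y)!f" "\<forall>k<f. (False#y)!k"
      "Suc f = length (False#y) \<or> (False#y)!(Suc f)" unfolding inY_def by blast
  have "f = 0" using f(3) by (cases f) auto
  then show "y = [] \<or> y!0" using f(4) by auto
next
  assume a: "y = [] \<or> y!0"
  show "inY (False # y)" unfolding inY_def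
    by (rule exI[of _ 0]) (use a in auto)
qed

lemma Yk_0: "Yk 0 = {}" by (simp add: Yk_def inY_Nil)
lemma Yk_1: "Yk 1 = {[False]}"
proof (intro equalityI subsetI)
  fix y assume "y \<in> Yk 1"
  then have y: "length y = 1" "inY y" unfolding Yk_def by auto
  then obtain a where a: "y = [a]" by (metis One_nat_def length_0_conv length_Suc_conv)
  have "a = False" using y(2) a inY_True[of "[]"] inY_Nil by (cases a) auto
  then show "y \<in> {[False]}" using a by simp
next
  fix y assume "y \<in> {[False]}"
  then show "y \<in> Yk 1" unfolding Yk_def using inY_False[of "[]"] by simp
qed

lemma Yk_SS: "Yk (Suc (Suc k)) = Cons True ` Yk (Suc k) \<union> (\<lambda>v. False # True # v) ` {v. length v = k}"
proof (intro equalityI subsetI)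
  fix y assume "y \<in> Yk (Suc (Suc k))"
  then have y: "length y = Suc (Suc k)" "inY y" unfolding Yk_def by auto
  then obtain a y' where a: "y = a # y'" "length y' = Suc k" by (metis length_Suc_conv)
  show "y \<in> Cons True ` Yk (Suc k) \<union> (\<lambda>v. False # True # v) ` {v. length v = k}"
  proof (cases a)
    case True
    then have "y' \<in> Yk (Suc k)" using y a inY_True unfolding Yk_def by auto
    then show ?thesis using a True by blast
  next
    case False
    then have "y'!0" using y a inY_False by auto
    moreover obtain b v where "y' = b # v" "length v = k" using a(2) by (metis length_Suc_conv)
    ultimately show ?thesis using a False by auto
  qed
next
  fix y assume "y \<in> Cons True ` Yk (Suc k) \<union> (\<lambda>v. False # True # v) ` {v. length v = k}"
  then show "y \<in> Yk (Suc (Suc k))" unfolding Yk_def using inY_True inY_False by auto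
qed

lemma card_bool_lists: "card {v::bool list. length v = k} = 2^k"
  using card_lists_length_eq[of "UNIV::bool set" k] by simp

lemma finite_bool_lists: "finite {v::bool list. length v = k}"
  using finite_lists_length_eq[of "UNIV::bool set" k] by simp

lemma finite_Yk: "finite (Yk k)"
  by (rule finite_subset[OF _ finite_bool_lists[of k]]) (auto simp: Yk_def)

lemma card_Yk_Suc: "card (Yk (Suc k)) = 2^k"
proof (induction k)
  case 0 then show ?case by (simp add: Yk_1[unfolded One_nat_def])
next
  case (Suc k)
  have d: "Cons True ` Yk (Suc k) \<inter> (\<lambda>v. False # True # v) ` {v. length v = k} = {}" by auto
  have "card (Yk (Suc (Suc k))) = card (Cons True ` Yk (Suc k)) + card ((\<lambda>v. False # True # v) ` {v. length v = k})"
    unfolding Yk_SS by (rule card_Un_disjoint) (use d finite_Yk finite_bool_lists in auto)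
  also have "card (Cons True ` Yk (Suc k)) = card (Yk (Suc k))" by (rule card_image) (simp add: inj_on_def)
  also have "card ((\<lambda>v. False # True # v) ` {v. length v = k}) = card {v::bool list. length v = k}"
    by (rule card_image) (simp add: inj_on_def)
  finally show ?case using Suc card_bool_lists by simp
qed

lemma card_Yk: "card (Yk k) = (if k = 0 then 0 else 2^(k-1))"
  using card_Yk_Suc[of "k-1"] Yk_0 by (cases k) auto

lemma JR_eq: "JR M = (\<lambda>j. (j, M - j)) ` {1..M}"
  unfolding JR_def by (auto simp: image_iff)

lemma card_JR: "card (JR M) = M"
proof -
  have "card ((\<lambda>j. (j, M - j)) ` {1..M}) = card {1..M}" by (rule card_image) (simp add: inj_on_def)
  then show ?thesis using JR_eq by simp
qed

lemma finite_JR: "finite (JR M)" using JR_eq by simp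

definition cc :: "nat \<Rightarrow> nat" where "cc k = (if k = 0 then 0 else 2^(k-1))"

lemma csum: "(\<Sum>k<Suc N. cc k) + 1 = 2^N"
  by (induction N) (auto simp: cc_def)

lemma ssum: "(\<Sum>k<N. cc k * (N - k)) + N + 1 = 2^N"
proof (induction N)
  case 0 then show ?case by simp
next
  case (Suc N)
  have "(\<Sum>k<Suc N. cc k * (Suc N - k)) = (\<Sum>k<N. cc k * (Suc N - k)) + cc N"
    by simp
  also have "(\<Sum>k<N. cc k * (Suc N - k)) = (\<Sum>k<N. cc k * (N - k) + cc k)"
    by (rule sum.cong) (auto simp: Suc_diff_le)
  also have "\<dots> = (\<Sum>k<N. cc k * (N - k)) + (\<Sum>k<N. cc k)" by (simp add: sum.distrib)
  finally have "(\<Sum>k<Suc N. cc k * (Suc N - k)) = (\<Sum>k<N. cc k * (N - k)) + (\<Sum>k<Suc N. cc k)" by simp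
  then show ?case using Suc csum[of N] by simp
qed

lemma rep_inj:
  assumes e: "y @ replicate j True @ replicate r False = y' @ replicate j True @ replicate r' False" and j: "0 < j"
  shows "y = y' \<and> r = r'"
proof -
  have "rev (y @ replicate j True @ replicate r False) = rev (y' @ replicate j True @ replicate r' False)"
    using e by simp
  then have e2: "replicate r False @ replicate j True @ rev y = replicate r' False @ replicate j True @ rev y'"
    by simp
  have tw0: "takeWhile Not (replicate r False @ True # zs) = replicate r False" for r zs
    by (induction r) auto
  have rj: "replicate j True = True # replicate (j - 1) True" using j by (cases j) auto
  have tw: "takeWhile Not (replicate r False @ replicate j True @ zs) = replicate r False" for r zs
    using tw0 rj by simp
  have "replicate r False = (replicate r' False :: bool list)" using arg_cong[OF e2, of "takeWhile Not"] tw by simp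
  then have rr: "r = r'" by simp
  then have "y = y'" using e by simp
  then show ?thesis using rr by simp
qed

definition TT :: "nat \<Rightarrow> (bool list \<times> nat) set" where
  "TT N = {(w,j). length w = N \<and> 0 < j \<and> valid w j}"

definition SS :: "nat \<Rightarrow> (bool list \<times> nat \<times> nat) set" where
  "SS N = (\<Union>k\<in>{..<N}. Yk k \<times> JR (N - k))"

definition ff3 :: "bool list \<times> nat \<times> nat \<Rightarrow> bool list \<times> nat" where
  "ff3 x = (case x of (y,j,r) \<Rightarrow> (y @ replicate j True @ replicate r False, j))"

lemma SS_bij: "bij_betw ff3 (SS N) (TT N)"
proof (rule bij_betw_imageI)
  show "inj_on ff3 (SS N)"
  proof (rule inj_onI)
    fix a b assume a: "a \<in> SS N" and b: "b \<in> SS N" and e: "ff3 a = ff3 b"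
    obtain y j r where A: "a = (y,j,r)" "0 < j" using a unfolding SS_def JR_def by auto
    obtain y' j' r' where B: "b = (y',j',r')" using b by (cases b) auto
    have jj: "j = j'" using e A B by (simp add: ff3_def)
    have "y @ replicate j True @ replicate r False = y' @ replicate j True @ replicate r' False"
      using e A B jj by (simp add: ff3_def)
    then have "y = y' \<and> r = r'" using rep_inj A(2) by blast
    then show "a = b" using A B jj by simp
  qed
next
  show "ff3 ` SS N = TT N"
  proof (intro equalityI subsetI)
    fix x assume "x \<in> ff3 ` SS N"
    then obtain k y j r where k: "k < N" "y \<in> Yk k" "(j,r) \<in> JR (N - k)" "x = ff3 (y,j,r)"
      unfolding SS_def by auto
    have y: "length y = k" "inY y" using k(2) unfolding Yk_def by auto
    have jr: "0 < j" "j + r = N - k" using k(3) unfolding JR_def by auto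
    have "valid (y @ replicate j True @ replicate r False) j" unfolding valid_def using y jr by blast
    then show "x \<in> TT N" using k(1,4) y jr unfolding TT_def ff3_def by simp
  next
    fix x assume "x \<in> TT N"
    then obtain w j where wj: "x = (w,j)" "length w = N" "0 < j" "valid w j" unfolding TT_def by auto
    then obtain y r where yr: "inY y" "w = y @ replicate j True @ replicate r False"
      unfolding valid_def by auto
    have lk: "length y < N" using yr wj by simp
    have "(y,j,r) \<in> Yk (length y) \<times> JR (N - length y)" using yr wj unfolding Yk_def JR_def by auto
    then have "(y,j,r) \<in> SS N" using lk unfolding SS_def by blast
    moreover have "x = ff3 (y,j,r)" using wj yr unfolding ff3_def by simp
    ultimately show "x \<in> ff3 ` SS N" by blast
  qed
qed

lemma card_SS: "card (SS N) = (\<Sum>k<N. cc k * (N - k))"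
proof -
  have "card (SS N) = (\<Sum>k\<in>{..<N}. card (Yk k \<times> JR (N - k)))"
    unfolding SS_def
    apply (rule card_UN_disjoint)
      apply simp
     apply (simp add: finite_Yk finite_JR)
    apply (auto simp: Yk_def)
    done
  also have "\<dots> = (\<Sum>k<N. cc k * (N - k))"
    by (rule sum.cong) (auto simp: card_cartesian_product card_Yk card_JR cc_def)
  finally show ?thesis .
qed

lemma card_VV: "card (VV N) + N + 1 = 2^(Suc N)"
proof -
  define V0 where "V0 = (\<lambda>w. (w, 0::nat)) ` {w::bool list. length w = N}"
  have VV_eq: "VV N = V0 \<union> TT N"
    unfolding VV_def V0_def TT_def by (auto simp: valid_def)
  have d: "V0 \<inter> TT N = {}" unfolding V0_def TT_def by auto
  have c0: "card V0 = 2^N" unfolding V0_def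
    using card_image[of "\<lambda>w. (w, 0::nat)" "{w::bool list. length w = N}"] card_bool_lists
    by (simp add: inj_on_def)
  have f0: "finite V0" unfolding V0_def using finite_bool_lists by simp
  have cT: "card (TT N) = card (SS N)" using bij_betw_same_card[OF SS_bij] by simp
  have fT: "finite (TT N)"
  proof -
    have "finite (SS N)" unfolding SS_def by (auto simp: finite_Yk finite_JR)
    then show ?thesis using bij_betw_finite[OF SS_bij] by simp
  qed
  have "card (VV N) = card V0 + card (TT N)" unfolding VV_eq by (rule card_Un_disjoint[OF f0 fT d])
  then show ?thesis using c0 cT card_SS ssum[of N] by simp
qed

lemma card_Bset2: "card (Bset (N+2)) + N + 1 = 2^(Suc N)"
  using card_Bset card_VV by simp


definition sh :: "nat list \<Rightarrow> nat list" where "sh s = 1 # map Suc s"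

lemma sh_len: "length (sh s) = Suc (length s)" by (simp add: sh_def)
lemma sh_0: "sh s ! 0 = 1" by (simp add: sh_def)
lemma sh_Suc: "i < length s \<Longrightarrow> sh s ! Suc i = Suc (s!i)" by (simp add: sh_def)

lemma sh_pos: "i < length (sh s) \<Longrightarrow> 0 < i \<Longrightarrow> \<exists>i'. i = Suc i' \<and> i' < length s"
  by (cases i) (auto simp: sh_len)

lemma sh_321: "c321 (sh s) \<longleftrightarrow> c321 s"
proof
  assume "c321 (sh s)"
  then obtain i j k where h: "i<j" "j<k" "k < length (sh s)" "sh s!j < sh s!i" "sh s!k < sh s!j"
    unfolding c321_def by blast
  have i0: "i \<noteq> 0"
  proof
    assume "i = 0"
    then have "sh s ! j < 1" using h sh_0 by simp
    moreover obtain j' where "j = Suc j'" "j' < length s" using sh_pos[of j s] h by auto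
    ultimately show False using sh_Suc by simp
  qed
  obtain i' where i': "i = Suc i'" using i0 by (cases i) auto
  obtain j' where j': "j = Suc j'" using h by (cases j) auto
  obtain k' where k': "k = Suc k'" "k' < length s" using h sh_len by (cases k) auto
  show "c321 s" unfolding c321_def
    apply (rule exI[of _ i'], rule exI[of _ j'], rule exI[of _ k'])
    using h i' j' k' sh_Suc[of i' s] sh_Suc[of j' s] sh_Suc[of k' s] by simp
next
  assume "c321 s"
  then obtain i j k where h: "i<j" "j<k" "k < length s" "s!j < s!i" "s!k < s!j"
    unfolding c321_def by blast
  show "c321 (sh s)" unfolding c321_def
    apply (rule exI[of _ "Suc i"], rule exI[of _ "Suc j"], rule exI[of _ "Suc k"])
    using h sh_Suc[of i s] sh_Suc[of j s] sh_Suc[of k s] sh_len[of s] by simp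
qed

lemma sh_5: "c5 (sh s) \<longleftrightarrow> c5 s"
proof
  assume "c5 (sh s)"
  then obtain a b c d e where h: "a<b" "b<c" "c<d" "d<e" "e < length (sh s)"
      "sh s!b < sh s!a" "sh s!a < sh s!c" "sh s!c < sh s!e" "sh s!e < sh s!d"
    unfolding c5_def by blast
  have a0: "a \<noteq> 0"
  proof
    assume "a = 0"
    then have "sh s ! b < 1" using h sh_0 by simp
    moreover obtain b' where "b = Suc b'" "b' < length s" using sh_pos[of b s] h by auto
    ultimately show False using sh_Suc by simp
  qed
  obtain a' where a': "a = Suc a'" using a0 by (cases a) auto
  obtain b' where b': "b = Suc b'" using h by (cases b) auto
  obtain c' where c': "c = Suc c'" using h by (cases c) auto
  obtain d' where d': "d = Suc d'" using h by (cases d) auto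
  obtain e' where e': "e = Suc e'" "e' < length s" using h sh_len by (cases e) auto
  show "c5 s" unfolding c5_def
    apply (rule exI[of _ a'], rule exI[of _ b'], rule exI[of _ c'], rule exI[of _ d'], rule exI[of _ e'])
    using h a' b' c' d' e' sh_Suc[of a' s] sh_Suc[of b' s] sh_Suc[of c' s] sh_Suc[of d' s] sh_Suc[of e' s]
    by simp
next
  assume "c5 s"
  then obtain a b c d e where h: "a<b" "b<c" "c<d" "d<e" "e < length s"
      "s!b < s!a" "s!a < s!c" "s!c < s!e" "s!e < s!d"
    unfolding c5_def by blast
  show "c5 (sh s)" unfolding c5_def
    apply (rule exI[of _ "Suc a"], rule exI[of _ "Suc b"], rule exI[of _ "Suc c"], rule exI[of _ "Suc d"], rule exI[of _ "Suc e"])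
    using h sh_Suc[of a s] sh_Suc[of b s] sh_Suc[of c s] sh_Suc[of d s] sh_Suc[of e s] sh_len[of s] by simp
qed

lemma sh_fish: "fishburn (sh s) \<longleftrightarrow> fishburn s"
proof
  assume f: "fishburn (sh s)"
  show "fishburn s" unfolding fishburn_def
  proof
    assume "\<exists>i j. i < j \<and> j < length s \<and> i + 1 < length s \<and> s ! j < s ! i \<and> s ! i < s ! (i + 1) \<and> s ! i = s ! j + 1"
    then obtain i j where h: "i < j" "j < length s" "i + 1 < length s" "s ! j < s ! i" "s ! i < s ! (i + 1)" "s ! i = s ! j + 1"
      by blast
    have "Suc i < Suc j \<and> Suc j < length (sh s) \<and> Suc i + 1 < length (sh s) \<and> sh s ! Suc j < sh s ! Suc i \<and>
        sh s ! Suc i < sh s ! (Suc i + 1) \<and> sh s ! Suc i = sh s ! Suc j + 1"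
      using h sh_Suc[of i s] sh_Suc[of j s] sh_Suc[of "i+1" s] sh_len[of s] by simp
    then show False using f unfolding fishburn_def by blast
  qed
next
  assume f: "fishburn s"
  show "fishburn (sh s)" unfolding fishburn_def
  proof
    assume "\<exists>i j. i < j \<and> j < length (sh s) \<and> i + 1 < length (sh s) \<and> sh s ! j < sh s ! i \<and>
       sh s ! i < sh s ! (i + 1) \<and> sh s ! i = sh s ! j + 1"
    then obtain i j where h: "i < j" "j < length (sh s)" "i + 1 < length (sh s)" "sh s ! j < sh s ! i"
       "sh s ! i < sh s ! (i + 1)" "sh s ! i = sh s ! j + 1" by blast
    obtain j' where j': "j = Suc j'" "j' < length s" using sh_pos[of j s] h by auto
    have i0: "i \<noteq> 0"
    proof
      assume "i = 0"
      then have "sh s ! j < 1" using h sh_0 by simp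
      then show False using j' sh_Suc by simp
    qed
    obtain i' where i': "i = Suc i'" using i0 by (cases i) auto
    have "i' < j' \<and> j' < length s \<and> i' + 1 < length s \<and> s ! j' < s ! i' \<and> s ! i' < s ! (i' + 1) \<and> s ! i' = s ! j' + 1"
      using h i' j' sh_Suc[of i' s] sh_Suc[of j' s] sh_Suc[of "i'+1" s] sh_len[of s] by simp
    then show False using f unfolding fishburn_def by blast
  qed
qed

lemma sh_perm: "sh s \<in> perms_of (Suc n) \<longleftrightarrow> s \<in> perms_of n"
proof
  assume a: "sh s \<in> perms_of (Suc n)"
  then have d: "distinct (1 # map Suc s)" and st: "insert 1 (Suc ` set s) = {1..Suc n}"
    unfolding perms_of_def sh_def by auto
  have ds: "distinct s" using d by (simp add: distinct_map)
  have n0: "0 \<notin> set s" using d by auto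
  have "set s = {1..n}"
  proof (intro equalityI subsetI)
    fix x assume x: "x \<in> set s"
    have "Suc x \<in> insert 1 (Suc ` set s)" using x by simp
    then have "Suc x \<in> {1..Suc n}" by (simp only: st)
    then show "x \<in> {1..n}" using x n0 by (cases x) auto
  next
    fix x assume x: "x \<in> {1..n}"
    then have "Suc x \<in> insert 1 (Suc ` set s)" using st by auto
    then show "x \<in> set s" using x by auto
  qed
  then show "s \<in> perms_of n" using ds by (simp add: perms_of_def)
next
  assume "s \<in> perms_of n"
  then have ds: "distinct s" and st: "set s = {1..n}" unfolding perms_of_def by auto
  have "distinct (sh s)" using ds st by (auto simp: sh_def distinct_map)
  moreover have "set (sh s) = {1..Suc n}"
  proof -
    have "set (sh s) = insert 1 (Suc ` {1..n})" using st by (simp add: sh_def)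
    also have "\<dots> = {1..Suc n}" by (auto simp: image_iff)
    finally show ?thesis .
  qed
  ultimately show "sh s \<in> perms_of (Suc n)" by (simp add: perms_of_def)
qed

lemma sh_good: "good (Suc n) (sh s) \<longleftrightarrow> good n s"
  unfolding good_def using sh_perm sh_fish sh_321 sh_5 by blast

definition Aset :: "nat \<Rightarrow> nat list set" where "Aset n = {p. good n p}"

lemma finite_Aset: "finite (Aset n)"
proof -
  have "Aset n \<subseteq> {xs. set xs \<subseteq> {1..n} \<and> length xs = n}"
    unfolding Aset_def good_def perms_of_def using distinct_card by fastforce
  then show ?thesis using finite_lists_length_eq[of "{1..n}" n] finite_subset by auto
qed

lemma Aset_split: "Aset (Suc n) = sh ` Aset n \<union> Bset (Suc n)"
proof (intro equalityI subsetI)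
  fix p assume "p \<in> Aset (Suc n)"
  then have g: "good (Suc n) p" unfolding Aset_def by simp
  show "p \<in> sh ` Aset n \<union> Bset (Suc n)"
  proof (cases "p!0 = 1")
    case False then show ?thesis using g unfolding Bset_def by simp
  next
    case True
    have pp: "distinct p" "set p = {1..Suc n}" using g unfolding good_def perms_of_def by auto
    have lp: "length p = Suc n" using pp distinct_card[of p] by simp
    then obtain x t where xt: "p = x # t" by (cases p) auto
    have x1: "x = 1" using True xt by simp
    have tpos: "\<forall>y\<in>set t. 1 \<le> y" using pp xt by auto
    define s where "s = map (\<lambda>y. y - 1) t"
    have "map Suc s = t" unfolding s_def using tpos by (induction t) auto
    then have ps: "p = sh s" using xt x1 by (simp add: sh_def)
    then have "good n s" using g sh_good by simp
    then show ?thesis using ps unfolding Aset_def by blast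
  qed
next
  fix p assume "p \<in> sh ` Aset n \<union> Bset (Suc n)"
  then show "p \<in> Aset (Suc n)" unfolding Aset_def Bset_def using sh_good by auto
qed

lemma card_Aset_Suc: "card (Aset (Suc n)) = card (Aset n) + card (Bset (Suc n))"
proof -
  have d: "sh ` Aset n \<inter> Bset (Suc n) = {}" unfolding Bset_def by (auto simp: sh_0)
  have fB: "finite (Bset (Suc n))"
    using finite_Aset[of "Suc n"] unfolding Aset_def Bset_def by (rule finite_subset[rotated]) auto
  have "card (Aset (Suc n)) = card (sh ` Aset n) + card (Bset (Suc n))"
    unfolding Aset_split by (rule card_Un_disjoint) (use finite_Aset fB d in auto)
  moreover have "card (sh ` Aset n) = card (Aset n)"
    by (rule card_image) (auto simp: inj_on_def sh_def)
  ultimately show ?thesis by simp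
qed

lemma Aset_1: "Aset 1 = {[1]}"
proof (intro equalityI subsetI)
  fix p assume "p \<in> Aset 1"
  then have pp: "distinct p" "set p = {1}" unfolding Aset_def good_def perms_of_def by auto
  have "length p = 1" using pp distinct_card[of p] by simp
  then obtain x where "p = [x]" by (metis One_nat_def length_0_conv length_Suc_conv)
  then show "p \<in> {[1]}" using pp by simp
next
  fix p :: "nat list" assume "p \<in> {[1]}"
  then show "p \<in> Aset 1"
    unfolding Aset_def good_def perms_of_def fishburn_def c321_def c5_def by auto
qed

lemma card_Aset: "n \<ge> 1 \<Longrightarrow> int (card (Aset n)) = 2 ^ n - int (n choose 2) - 1"
proof (induction n rule: dec_induct)
  case base then show ?case using Aset_1 by simp
next
  case (step n)
  have B: "card (Bset ((n - 1) + 2)) + (n - 1) + 1 = 2 ^ Suc (n - 1)" by (rule card_Bset2)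
  have e: "(n - 1) + 2 = Suc n" using step by simp
  have B2: "card (Bset (Suc n)) + n = 2 ^ n" using B e step by simp
  have ch: "Suc n choose 2 = n + (n choose 2)"
    using binomial_Suc_Suc[of n 1] by (simp add: numeral_2_eq_2)
  have "int (card (Aset (Suc n))) = int (card (Aset n)) + int (card (Bset (Suc n)))"
    using card_Aset_Suc by simp
  also have "int (card (Bset (Suc n))) = 2 ^ n - int n" using B2
    by (metis add_diff_cancel_right' of_nat_add of_nat_numeral of_nat_power)
  finally show ?case using step.IH ch by simp
qed

theorem mainTheorem17:
  fixes n :: nat
  assumes "n \<ge> 1"
  shows "int (card (F n [[3,2,1], [2,1,3,5,4]])) = 2 ^ n - int (n choose 2) - 1"
  using card_Aset[OF assms] F_good[of n] unfolding Aset_def by simp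


end
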